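(* Assume $\bar p=\mu\cdot\mathbf p=1/2$ and let $\eta$ be any distribution on $\mathcal R$. With $\mathbf r,\tilde{\mathbf r},\nu,\tilde\nu,\delta,\tilde\delta$ as in the context, $\nu=\tilde\nu$ and $\delta+\tilde\delta=1-2/\nu$.
   Context: Let $\mathcal R=\{1,\dots,N\}$ and let $K$ be a stochastic matrix on $\mathcal R$ whose Markov chain has a unique closed irreducible subset; let $\mu$ (row vector) be its unique stationary distribution. Fix $p:\mathcal R\to(0,1)$, $\mathbf p=(p(1),\dots,p(N))^t$, $\mathbf 1$ the all-ones column vector, $I$ the identity, $D_p$ the diagonal matrix with entries $p(i)$, $D_{1-p}=I-D_p$. Define $\mathbf r=(I-K+2(\mathbf 1-\mathbf p)\mu D_{1-p}K)^{-1}\mathbf p-\mathbf 1$, $\tilde{\mathbf r}=(I-K+2\mathbf p\,\mu D_pK)^{-1}(\mathbf 1-\mathbf p)-\mathbf 1$, $\nu=2+4\mu D_pK\mathbf r$, $\tilde\nu=2+4\mu D_{1-p}K\tilde{\mathbf r}$, $\delta=2\,\eta\cdot\mathbf r/\nu$, $\tilde\delta=2\,\eta\cdot\tilde{\mathbf r}/\tilde\nu$. *)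

theory Defs
  imports "HOL-Analysis.Analysis"
begin

text \<open>States R = {1..N} are modelled by an arbitrary finite type 'n.
  Column vectors and row vectors are both elements of real^'n; a matrix is real^'n^'n
  with rows indexed first (K$i$j = K(i,j)).\<close>

definition stochastic_matrix :: "real^'n^'n \<Rightarrow> bool" where
  "stochastic_matrix K \<longleftrightarrow> (\<forall>i j. K$i$j \<ge> 0) \<and> (\<forall>i. (\<Sum>j\<in>UNIV. K$i$j) = 1)"

definition prob_vector :: "real^'n \<Rightarrow> bool" where
  "prob_vector v \<longleftrightarrow> (\<forall>i. v$i \<ge> 0) \<and> (\<Sum>i\<in>UNIV. v$i) = 1"

definition trans_rel :: "real^'n^'n \<Rightarrow> ('n \<times> 'n) set" where
  "trans_rel K = {(i,j). K$i$j > 0}"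

definition closed_set :: "real^'n^'n \<Rightarrow> 'n set \<Rightarrow> bool" where
  "closed_set K C \<longleftrightarrow> C \<noteq> {} \<and> (\<forall>i\<in>C. \<forall>j. K$i$j > 0 \<longrightarrow> j \<in> C)"

definition irreducible_set :: "real^'n^'n \<Rightarrow> 'n set \<Rightarrow> bool" where
  "irreducible_set K C \<longleftrightarrow> (\<forall>i\<in>C. \<forall>j\<in>C. (i, j) \<in> (trans_rel K)\<^sup>*)"

definition unique_closed_irreducible :: "real^'n^'n \<Rightarrow> bool" where
  "unique_closed_irreducible K \<longleftrightarrow> (\<exists>!C. closed_set K C \<and> irreducible_set K C)"

definition stationary_dist :: "real^'n^'n \<Rightarrow> real^'n \<Rightarrow> bool" where
  "stationary_dist K \<mu> \<longleftrightarrow> prob_vector \<mu> \<and> \<mu> v* K = \<mu>"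

definition diag_mat :: "real^'n \<Rightarrow> real^'n^'n" where
  "diag_mat v = (\<chi> i j. if i = j then v$i else 0)"

definition outer :: "real^'n \<Rightarrow> real^'n \<Rightarrow> real^'n^'n" where
  "outer a b = (\<chi> i j. a$i * b$j)"

definition ones :: "real^'n" where "ones = (\<chi> i. 1)"

definition rvec :: "real^'n^'n \<Rightarrow> real^'n \<Rightarrow> real^'n \<Rightarrow> real^'n" where
  "rvec K \<mu> p = matrix_inv (mat 1 - K + 2 *\<^sub>R outer (ones - p) (\<mu> v* (diag_mat (ones - p) ** K)))
                   *v p - ones"

definition rtvec :: "real^'n^'n \<Rightarrow> real^'n \<Rightarrow> real^'n \<Rightarrow> real^'n" where
  "rtvec K \<mu> p = matrix_inv (mat 1 - K + 2 *\<^sub>R outer p (\<mu> v* (diag_mat p ** K)))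
                   *v (ones - p) - ones"

definition nu :: "real^'n^'n \<Rightarrow> real^'n \<Rightarrow> real^'n \<Rightarrow> real" where
  "nu K \<mu> p = 2 + 4 * ((\<mu> v* (diag_mat p ** K)) \<bullet> rvec K \<mu> p)"

definition nut :: "real^'n^'n \<Rightarrow> real^'n \<Rightarrow> real^'n \<Rightarrow> real" where
  "nut K \<mu> p = 2 + 4 * ((\<mu> v* (diag_mat (ones - p) ** K)) \<bullet> rtvec K \<mu> p)"

definition delta :: "real^'n^'n \<Rightarrow> real^'n \<Rightarrow> real^'n \<Rightarrow> real^'n \<Rightarrow> real" where
  "delta K \<mu> p \<eta> = 2 * (\<eta> \<bullet> rvec K \<mu> p) / nu K \<mu> p"

definition deltat :: "real^'n^'n \<Rightarrow> real^'n \<Rightarrow> real^'n \<Rightarrow> real^'n \<Rightarrow> real" where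
  "deltat K \<mu> p \<eta> = 2 * (\<eta> \<bullet> rtvec K \<mu> p) / nut K \<mu> p"

end

theory Submission
  imports Defs
begin

lemma mv_nth: "((M::real^'n^'m) *v x)$i = (\<Sum>j\<in>UNIV. M$i$j * x$j)"
  by (simp add: matrix_vector_mult_def)

lemma ifm1: "(if P then a else 0) * (b::real) = (if P then a*b else 0)" by simp
lemma ifm2: "(b::real) * (if P then 1 else 0) = (if P then b else 0)" by simp

lemma Aapply:
  fixes K :: "real^'n^'n"
  shows "(mat 1 - K + 2 *\<^sub>R outer u w) *v z = z - K *v z + (2*(w \<bullet> z)) *\<^sub>R u"
  by (simp add: vec_eq_iff matrix_vector_mult_def outer_def mat_def inner_vec_def
      algebra_simps sum.distrib sum_subtractf sum_distrib_left sum_distrib_right ifm2)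

lemma wdot:
  fixes K :: "real^'n^'n"
  shows "(\<mu> v* (diag_mat q ** K)) \<bullet> x = (\<Sum>i\<in>UNIV. \<mu>$i * q$i * (K *v x)$i)"
proof -
  have "(\<mu> v* (diag_mat q ** K)) \<bullet> x = \<mu> \<bullet> (diag_mat q *v (K *v x))"
    by (simp add: dot_lmul_matrix matrix_vector_mul_assoc)
  also have "diag_mat q *v (K *v x) = (\<chi> i. q$i * (K *v x)$i)"
    by (simp add: vec_eq_iff matrix_vector_mult_def diag_mat_def ifm1)
  finally show ?thesis by (simp add: inner_vec_def mult.assoc)
qed

lemma inv_apply:
  fixes A :: "real^'n^'n"
  assumes "\<forall>z. A *v z = 0 \<longrightarrow> z = 0"
  shows "A *v (matrix_inv A *v v) = v"
proof -
  from assms obtain B where "B ** A = mat 1" using matrix_left_invertible_ker by blast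
  then have "invertible A" using invertible_left_inverse by blast
  then have "A ** matrix_inv A = mat 1 \<and> matrix_inv A ** A = mat 1"
    unfolding invertible_def matrix_inv_def by (rule someI_ex)
  then show ?thesis by (simp add: matrix_vector_mul_assoc)
qed

lemma jensen:
  fixes K :: "real^'n^'n"
  assumes "stochastic_matrix K"
  shows "((K *v x)$i)^2 \<le> (K *v (\<chi> j. (x$j)^2))$i"
proof -
  define m where "m = (K *v x)$i"
  have s1: "(\<Sum>j\<in>UNIV. K$i$j) = 1" and nn: "\<And>j. K$i$j \<ge> 0"
    using assms by (auto simp: stochastic_matrix_def)
  have "0 \<le> (\<Sum>j\<in>UNIV. K$i$j * (x$j - m)^2)"
    by (rule sum_nonneg) (simp add: nn)
  also have "\<dots> = (\<Sum>j\<in>UNIV. K$i$j * (x$j)^2) - 2*m*(\<Sum>j\<in>UNIV. K$i$j * x$j) + m^2 * (\<Sum>j\<in>UNIV. K$i$j)"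
    by (simp add: power2_eq_square algebra_simps sum.distrib sum_subtractf sum_distrib_left sum_distrib_right)
  also have "\<dots> = (K *v (\<chi> j. (x$j)^2))$i - m^2"
    by (simp add: s1 mv_nth m_def power2_eq_square)
  finally show ?thesis by (simp add: m_def)
qed

lemma closed_contains:
  fixes K :: "real^'n^'n"
  assumes ne: "i0 \<in> S" and cl: "\<forall>i\<in>S. \<forall>j. K$i$j > 0 \<longrightarrow> j \<in> S"
  shows "\<exists>C\<subseteq>S. closed_set K C \<and> irreducible_set K C"
proof -
  define R where "R i = {j. (i,j) \<in> (trans_rel K)\<^sup>*}" for i
  have RS: "R i \<subseteq> S" if "i \<in> S" for i
  proof
    fix j assume "j \<in> R i"
    then have "(i,j) \<in> (trans_rel K)\<^sup>*" by (simp add: R_def)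
    then show "j \<in> S"
      by (induction rule: rtrancl_induct) (use that cl in \<open>auto simp: trans_rel_def\<close>)
  qed
  have Rtr: "R j \<subseteq> R i" if "j \<in> R i" for i j
    using that by (auto simp: R_def)
  obtain i where iS: "i \<in> S" and imin: "\<forall>y. y \<in> S \<longrightarrow> card (R i) \<le> card (R y)"
    using ex_has_least_nat[of "\<lambda>i. i \<in> S" i0 "\<lambda>i. card (R i)"] ne by blast
  have "closed_set K (R i)"
    unfolding closed_set_def
  proof
    show "R i \<noteq> {}" by (auto simp: R_def)
    show "\<forall>a\<in>R i. \<forall>j. 0 < K $ a $ j \<longrightarrow> j \<in> R i"
      by (auto simp: R_def trans_rel_def intro: rtrancl_into_rtrancl)
  qed
  moreover have "irreducible_set K (R i)"
    unfolding irreducible_set_def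
  proof (intro ballI)
    fix j k assume j: "j \<in> R i" and k: "k \<in> R i"
    have "j \<in> S" using j RS iS by blast
    then have "card (R i) \<le> card (R j)" using imin by blast
    moreover have "R j \<subseteq> R i" using Rtr j by blast
    ultimately have "R j = R i" by (simp add: card_seteq)
    then have "k \<in> R j" using k by simp
    then show "(j, k) \<in> (trans_rel K)\<^sup>*" by (simp add: R_def)
  qed
  ultimately show ?thesis using RS iS by blast
qed

lemma harm_C:
  fixes K :: "real^'n^'n"
  assumes st: "stochastic_matrix K" and u: "unique_closed_irreducible K"
    and h: "K *v z = z" and C: "closed_set K C" "irreducible_set K C"
  shows "\<forall>i\<in>C. \<forall>j. z$j \<le> z$i"
proof -
  define M where "M = Max (range (\<lambda>j. z$j))"
  have le: "z$j \<le> M" for j unfolding M_def by (rule Max_ge) auto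
  have "M \<in> range (\<lambda>j. z$j)" unfolding M_def by (rule Max_in) auto
  then obtain i0 where i0: "z$i0 = M" by auto
  define S where "S = {i. z$i = M}"
  have cl: "\<forall>i\<in>S. \<forall>j. K$i$j > 0 \<longrightarrow> j \<in> S"
  proof (intro ballI allI impI)
    fix i j assume iS: "i \<in> S" and pos: "K$i$j > 0"
    have s1: "(\<Sum>j\<in>UNIV. K$i$j) = 1" and nn: "\<And>j. K$i$j \<ge> 0"
      using st by (auto simp: stochastic_matrix_def)
    have "(\<Sum>j\<in>UNIV. K$i$j * (M - z$j)) = M * (\<Sum>j\<in>UNIV. K$i$j) - (K *v z)$i"
      by (simp add: mv_nth algebra_simps sum_subtractf sum_distrib_left)
    also have "\<dots> = 0" using s1 h iS by (simp add: S_def)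
    finally have "\<forall>j\<in>UNIV. K$i$j * (M - z$j) = 0"
      by (subst sum_nonneg_eq_0_iff[symmetric]) (auto intro: mult_nonneg_nonneg nn simp: le)
    then show "j \<in> S" using pos by (force simp: S_def)
  qed
  obtain C' where "C' \<subseteq> S" "closed_set K C'" "irreducible_set K C'"
    using closed_contains[of i0 S K] cl i0 by (auto simp: S_def)
  moreover have "C' = C" using u C \<open>closed_set K C'\<close> \<open>irreducible_set K C'\<close>
    unfolding unique_closed_irreducible_def by blast
  ultimately show ?thesis using le by (auto simp: S_def)
qed

lemma harmonic_const:
  fixes K :: "real^'n^'n"
  assumes st: "stochastic_matrix K" and u: "unique_closed_irreducible K"
    and h: "K *v z = z"
  shows "\<exists>c. z = c *\<^sub>R ones"
proof -
  obtain C where C: "closed_set K C" "irreducible_set K C"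
    using u unfolding unique_closed_irreducible_def by blast
  then obtain i where i: "i \<in> C" by (auto simp: closed_set_def)
  have h2: "K *v (-z) = -z" proof -
    have "K *v (-z) = -(K *v z)" by (simp add: vec_eq_iff mv_nth sum_negf)
    then show ?thesis using h by simp
  qed
  have "\<forall>j. z$j \<le> z$i" using harm_C[OF st u h C] i by blast
  moreover have "\<forall>j. (-z)$j \<le> (-z)$i" using harm_C[OF st u h2 C] i by blast
  ultimately have "\<forall>j. z$j = z$i" by (metis neg_le_iff_le order_antisym vector_uminus_component)
  then show ?thesis by (intro exI[of _ "z$i"]) (simp add: vec_eq_iff ones_def)
qed

lemma inj_A:
  fixes K :: "real^'n^'n"
  assumes st: "stochastic_matrix K" and u: "unique_closed_irreducible K"
    and mK: "\<And>z. \<mu> \<bullet> (K *v z) = \<mu> \<bullet> z"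
    and mu: "\<mu> \<bullet> uu = 1/2" and w1: "w \<bullet> ones = 1/2"
  shows "\<forall>z. (mat 1 - K + 2 *\<^sub>R outer uu w) *v z = 0 \<longrightarrow> z = 0"
proof (intro allI impI)
  fix z assume "(mat 1 - K + 2 *\<^sub>R outer uu w) *v z = 0"
  then have e: "z - K *v z + (2*(w \<bullet> z)) *\<^sub>R uu = 0" by (simp add: Aapply)
  then have "\<mu> \<bullet> (z - K *v z + (2*(w \<bullet> z)) *\<^sub>R uu) = 0" by simp
  then have "w \<bullet> z = 0" by (simp add: inner_diff_right inner_add_right mK mu)
  with e have "K *v z = z" by simp
  then obtain c where c: "z = c *\<^sub>R ones" using harmonic_const[OF st u] by blast
  with \<open>w \<bullet> z = 0\<close> w1 have "c = 0" by simp
  with c show "z = 0" by simp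
qed

lemma solve_A:
  fixes K :: "real^'n^'n"
  assumes mK: "\<And>z. \<mu> \<bullet> (K *v z) = \<mu> \<bullet> z"
    and mu: "\<mu> \<bullet> uu = 1/2" and mv: "\<mu> \<bullet> v = 1/2"
    and A: "(mat 1 - K + 2 *\<^sub>R outer uu w) *v x = v"
  shows "w \<bullet> x = 1/2" and "x - K *v x = v - uu"
proof -
  from A have e: "x - K *v x + (2*(w \<bullet> x)) *\<^sub>R uu = v" by (simp add: Aapply)
  then have "\<mu> \<bullet> (x - K *v x + (2*(w \<bullet> x)) *\<^sub>R uu) = \<mu> \<bullet> v" by simp
  then show w: "w \<bullet> x = 1/2" by (simp add: inner_diff_right inner_add_right mK mu mv)
  from e show "x - K *v x = v - uu" by (simp add: w algebra_simps)
qed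

theorem proposition4p3:
  fixes K :: "real^'n^'n" and \<mu> p \<eta> :: "real^'n"
  assumes "stochastic_matrix K"
    and "unique_closed_irreducible K"
    and "stationary_dist K \<mu>"
    and "\<forall>i. 0 < p$i \<and> p$i < 1"
    and "\<mu> \<bullet> p = 1/2"
    and "prob_vector \<eta>"
  shows "nu K \<mu> p = nut K \<mu> p \<and>
         delta K \<mu> p \<eta> + deltat K \<mu> p \<eta> = 1 - 2 / nu K \<mu> p"
proof -
  note st = assms(1) and u = assms(2) and sd = assms(3) and pp = assms(4) and mp = assms(5)
  define a where "a = \<mu> v* (diag_mat (ones - p) ** K)"
  define b where "b = \<mu> v* (diag_mat p ** K)"
  define A where "A = mat 1 - K + 2 *\<^sub>R outer (ones - p) a"
  define B where "B = mat 1 - K + 2 *\<^sub>R outer p b"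
  define x where "x = matrix_inv A *v p"
  define y where "y = matrix_inv B *v (ones - p)"
  have rv: "rvec K \<mu> p = x - ones" by (simp add: rvec_def x_def A_def a_def)
  have rtv: "rtvec K \<mu> p = y - ones" by (simp add: rtvec_def y_def B_def b_def)
  have mK: "\<mu> \<bullet> (K *v z) = \<mu> \<bullet> z" for z
    using sd by (simp add: stationary_dist_def dot_lmul_matrix[symmetric])
  have mpos: "\<And>i. \<mu>$i \<ge> 0" and msum: "(\<Sum>i\<in>UNIV. \<mu>$i) = 1"
    using sd by (auto simp: stationary_dist_def prob_vector_def)
  have m1: "\<mu> \<bullet> ones = 1" using msum by (simp add: inner_vec_def ones_def)
  have m1p: "\<mu> \<bullet> (ones - p) = 1/2" using m1 mp by (simp add: inner_diff_right)
  have Kones: "K *v ones = ones"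
    using st by (simp add: vec_eq_iff mv_nth ones_def stochastic_matrix_def)
  have a1: "a \<bullet> ones = 1/2"
  proof -
    have "a \<bullet> ones = (\<Sum>i\<in>UNIV. \<mu>$i * (ones - p)$i * (K *v ones)$i)" unfolding a_def by (rule wdot)
    also have "\<dots> = \<mu> \<bullet> (ones - p)" unfolding Kones by (simp add: inner_vec_def ones_def)
    finally show ?thesis using m1p by simp
  qed
  have b1: "b \<bullet> ones = 1/2"
  proof -
    have "b \<bullet> ones = (\<Sum>i\<in>UNIV. \<mu>$i * p$i * (K *v ones)$i)" unfolding b_def by (rule wdot)
    also have "\<dots> = \<mu> \<bullet> p" unfolding Kones by (simp add: inner_vec_def ones_def)
    finally show ?thesis using mp by simp
  qed
  have ab: "a \<bullet> z + b \<bullet> z = \<mu> \<bullet> z" for z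
  proof -
    have "a \<bullet> z + b \<bullet> z = \<mu> \<bullet> (K *v z)"
      unfolding a_def b_def wdot by (simp add: inner_vec_def sum.distrib[symmetric] algebra_simps ones_def)
    then show ?thesis using mK by simp
  qed
  have Ax: "A *v x = p" unfolding x_def
    by (rule inv_apply, unfold A_def, rule inj_A[OF st u mK m1p a1])
  have By: "B *v y = ones - p" unfolding y_def
    by (rule inv_apply, unfold B_def, rule inj_A[OF st u mK mp b1])
  have ax: "a \<bullet> x = 1/2" and xe: "x - K *v x = p - (ones - p)"
    using solve_A[OF mK m1p mp Ax[unfolded A_def]] by auto
  have by': "b \<bullet> y = 1/2" and ye: "y - K *v y = (ones - p) - p"
    using solve_A[OF mK mp m1p By[unfolded B_def]] by auto
  have "K *v (x + y) = x + y"
  proof -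
    have "K *v (x + y) = K *v x + K *v y" by (simp add: matrix_vector_right_distrib)
    also have "\<dots> = x + y"
    proof -
      have "(x - K *v x) + (y - K *v y) = 0" using xe ye by simp
      then have "x + y - (K *v x + K *v y) = 0" by (simp add: algebra_simps)
      then show ?thesis by simp
    qed
    finally show ?thesis .
  qed
  then obtain c where c: "x + y = c *\<^sub>R ones" using harmonic_const[OF st u] by blast
  have yx: "y = c *\<^sub>R ones - x" using c by (simp add: algebra_simps)
  have bx: "b \<bullet> x = c/2 - 1/2"
  proof -
    have "b \<bullet> (x + y) = c/2" using c b1 by simp
    then show ?thesis using by' by (simp add: inner_add_right)
  qed
  have ay: "a \<bullet> y = c/2 - 1/2"
  proof -
    have "a \<bullet> (x + y) = c/2" using c a1 by simp
    then show ?thesis using ax by (simp add: inner_add_right)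
  qed
  have nuv: "nu K \<mu> p = 2*c - 2"
    unfolding nu_def rv b_def[symmetric] using bx b1 by (simp add: inner_diff_right algebra_simps)
  have nutv: "nut K \<mu> p = 2*c - 2"
    unfolding nut_def rtv a_def[symmetric] using ay a1 by (simp add: inner_diff_right algebra_simps)
  define h where "h = K *v x"
  define f where "f = (\<lambda>i. 2 * p$i - 1)"
  have xh: "x$i = h$i + f i" for i
    using xe unfolding h_def f_def by (simp add: vec_eq_iff ones_def algebra_simps)
  have bxs: "b \<bullet> x = (\<Sum>i\<in>UNIV. \<mu>$i * p$i * h$i)" by (simp add: b_def wdot h_def)
  have axs: "a \<bullet> x = (\<Sum>i\<in>UNIV. \<mu>$i * (1 - p$i) * h$i)" by (simp add: a_def wdot h_def ones_def)
  define x2 where "x2 = (\<chi> j. (x$j)^2)"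
  have pw: "2 * (\<mu>$i * p$i * h$i) = \<mu>$i*(1 - (f i)^2) + \<mu>$i*((x$i)^2 - (h$i)^2) - \<mu>$i
      + 2 * (\<mu>$i * (1 - p$i) * h$i)" for i
    unfolding xh f_def by (simp add: power2_eq_square algebra_simps)
  have "2 * (b \<bullet> x) = (\<Sum>i\<in>UNIV. \<mu>$i*(1 - (f i)^2)) + (\<Sum>i\<in>UNIV. \<mu>$i*((x$i)^2 - (h$i)^2))
      - (\<Sum>i\<in>UNIV. \<mu>$i) + 2 * (a \<bullet> x)"
    unfolding bxs axs sum_distrib_left pw by (simp add: sum.distrib sum_subtractf sum_distrib_left)
  then have bx2: "2 * (b \<bullet> x) = (\<Sum>i\<in>UNIV. \<mu>$i*(1 - (f i)^2)) + (\<Sum>i\<in>UNIV. \<mu>$i*((x$i)^2 - (h$i)^2))"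
    using msum ax by simp
  have "(\<Sum>i\<in>UNIV. \<mu>$i*((x$i)^2 - (h$i)^2)) = \<mu> \<bullet> x2 - (\<Sum>i\<in>UNIV. \<mu>$i*(h$i)^2)"
    by (simp add: x2_def inner_vec_def algebra_simps sum_subtractf)
  also have "\<dots> = \<mu> \<bullet> (K *v x2) - (\<Sum>i\<in>UNIV. \<mu>$i*(h$i)^2)" by (simp add: mK)
  also have "\<dots> = (\<Sum>i\<in>UNIV. \<mu>$i*((K *v x2)$i - (h$i)^2))"
    by (simp add: inner_vec_def algebra_simps sum_subtractf)
  also have "\<dots> \<ge> 0"
    by (rule sum_nonneg, rule mult_nonneg_nonneg, rule mpos)
       (use jensen[OF st, of x] in \<open>simp add: h_def x2_def\<close>)
  finally have J: "(\<Sum>i\<in>UNIV. \<mu>$i*((x$i)^2 - (h$i)^2)) \<ge> 0" .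
  obtain i0 where i0: "\<mu>$i0 > 0"
  proof (rule ccontr)
    assume "\<not> thesis"
    have "\<forall>i. \<mu>$i = 0"
    proof
      fix i show "\<mu>$i = 0" using \<open>\<not> thesis\<close> that[of i] mpos[of i] by force
    qed
    then show False using msum by simp
  qed
  have fl: "1 - (f i)^2 > 0" for i
  proof -
    have "\<bar>f i\<bar> < 1" using pp[rule_format, of i] by (simp add: f_def abs_less_iff)
    then have "\<bar>f i\<bar>^2 < 1^2" by (intro power_strict_mono) auto
    then show ?thesis by simp
  qed
  have "(\<Sum>i\<in>UNIV. \<mu>$i*(1 - (f i)^2)) > 0"
    by (rule sum_pos2[where i=i0]) (auto intro: mult_pos_pos mult_nonneg_nonneg mpos i0 fl less_imp_le)
  with J bx2 have "b \<bullet> x > 0" by simp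
  then have cgt: "c > 1" using bx by simp
  have e1: "\<eta> \<bullet> ones = 1" using assms(6) by (simp add: prob_vector_def inner_vec_def ones_def)
  have ex: "\<eta> \<bullet> x + \<eta> \<bullet> y = c" using c e1 by (simp add: inner_add_right[symmetric])
  have "delta K \<mu> p \<eta> + deltat K \<mu> p \<eta> = 2 * (\<eta> \<bullet> x - 1) / (2*c-2) + 2 * (\<eta> \<bullet> y - 1) / (2*c-2)"
    unfolding delta_def deltat_def nuv nutv rv rtv by (simp add: inner_diff_right e1)
  also have "\<dots> = (2 * (\<eta> \<bullet> x - 1) + 2 * (\<eta> \<bullet> y - 1)) / (2*c-2)"
    by (rule add_divide_distrib[symmetric])
  also have "\<dots> = ((2*c - 2) - 2) / (2*c-2)" using ex by (simp add: algebra_simps)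
  also have "\<dots> = 1 - 2 / (2*c - 2)" using cgt by (subst diff_divide_distrib) simp
  finally show ?thesis using nuv nutv by simp
qed

end
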